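(* Let $q=2$, and assume $A\cap B=\emptyset$, $|C|=m-1$ and $|A|\ge2$. Then the dual code $\mathcal C_{\overline{\mathcal N}_4}^\perp$ is a binary distance-optimal linear code with parameters $\left[2^{m+|A|+|B|}-2^{m+|B|},\ 2^{m+|A|+|B|}-2^{m+|B|}-m-2|A|-|B|,\ 4\right]$.
   Context: $\mathbb F_2$ is the binary field, $m\ge2$, $[m]=\{1,\dots,m\}$, $\mathrm{supp}(v)=\{i:v_i\ne0\}$. For nonempty $P\subseteq[m]$, $\Delta_P=\{v\in\mathbb F_2^m:\mathrm{supp}(v)\subseteq P\}$, $\Delta_P^c=\mathbb F_2^m\setminus\Delta_P$, $\Delta_P^*=\Delta_P\setminus\{\mathbf 0\}$. $A,B,C$ are nonempty subsets of $[m]$. Let $\mathcal N_4=\{(w_2+\omega,w_3,w_1)\in\mathbb F_2^{3m}: w_1\in\Delta_A^*,\ w_2\in\Delta_B,\ w_3\in\Delta_C^c,\ \omega\in\{\mathbf 0,w_1\}\}$, set $\overline{\mathcal N}_4=\mathcal N_4$ (over $\mathbb F_2$ each scalar class is a singleton), and let $\mathcal C_{\overline{\mathcal N}_4}$ be the binary linear code spanned by the rows of the $3m\times|\overline{\mathcal N}_4|$ matrix whose columns are the elements of $\overline{\mathcal N}_4$. $\mathcal C^\perp$ is the Euclidean dual. An $[n,k,d]$ code is distance-optimal if no linear $[n,k,d+1]$ code over the same field exists. *)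

theory Defs
  imports Main "HOL-Library.Z2" "HOL-Library.Function_Algebras"
begin

text \<open>Binary field: the type bit from HOL-Library.Z2 (a field with two elements).
Vectors of F_2^m are represented as functions nat => bit supported in {1..m}.\<close>

definition vecs :: "nat \<Rightarrow> (nat \<Rightarrow> bit) set" where
  "vecs m = {v. \<forall>i. v i \<noteq> 0 \<longrightarrow> i \<in> {1..m}}"

definition supp :: "(nat \<Rightarrow> bit) \<Rightarrow> nat set" where
  "supp v = {i. v i \<noteq> 0}"

definition Delta :: "nat \<Rightarrow> nat set \<Rightarrow> (nat \<Rightarrow> bit) set" where
  "Delta m P = {v \<in> vecs m. supp v \<subseteq> P}"

definition DeltaC :: "nat \<Rightarrow> nat set \<Rightarrow> (nat \<Rightarrow> bit) set" where
  "DeltaC m P = vecs m - Delta m P"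

definition DeltaS :: "nat \<Rightarrow> nat set \<Rightarrow> (nat \<Rightarrow> bit) set" where
  "DeltaS m P = Delta m P - {0}"

type_synonym col3 = "(nat \<Rightarrow> bit) \<times> (nat \<Rightarrow> bit) \<times> (nat \<Rightarrow> bit)"

definition N4 :: "nat \<Rightarrow> nat set \<Rightarrow> nat set \<Rightarrow> nat set \<Rightarrow> col3 set" where
  "N4 m A B C = {(w2 + \<omega>, w3, w1) | w1 w2 w3 \<omega>.
      w1 \<in> DeltaS m A \<and> w2 \<in> Delta m B \<and> w3 \<in> DeltaC m C \<and> \<omega> \<in> {0, w1}}"

definition ip3 :: "nat \<Rightarrow> col3 \<Rightarrow> col3 \<Rightarrow> bit" where
  "ip3 m x y = (\<Sum>i\<in>{1..m}. fst x i * fst y i + fst (snd x) i * fst (snd y) i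
                             + snd (snd x) i * snd (snd y) i)"

text \<open>Codes of length |I| are sets of words I -> F_2 (zero outside I).
The code spanned by the rows of the matrix whose columns are the elements of N:
its codewords are x^T G for x in F_2^{3m}.\<close>
definition col_code :: "nat \<Rightarrow> col3 set \<Rightarrow> (col3 \<Rightarrow> bit) set" where
  "col_code m N = {(\<lambda>c. if c \<in> N then ip3 m x c else 0) | x.
                    x \<in> vecs m \<times> vecs m \<times> vecs m}"

definition words :: "'i set \<Rightarrow> ('i \<Rightarrow> bit) set" where
  "words I = {y. \<forall>j. j \<notin> I \<longrightarrow> y j = 0}"

definition dual_code :: "'i set \<Rightarrow> ('i \<Rightarrow> bit) set \<Rightarrow> ('i \<Rightarrow> bit) set" where
  "dual_code I Cd = {y \<in> words I. \<forall>c\<in>Cd. (\<Sum>j\<in>I. y j * c j) = 0}"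

definition bin_linear_code :: "'i set \<Rightarrow> ('i \<Rightarrow> bit) set \<Rightarrow> bool" where
  "bin_linear_code I Cd \<longleftrightarrow> finite I \<and> Cd \<subseteq> words I \<and> 0 \<in> Cd \<and>
     (\<forall>x\<in>Cd. \<forall>y\<in>Cd. x + y \<in> Cd)"

text \<open>Dimension over F_2: existence of a basis with k elements (over F_2, linear
combinations are exactly subset sums).\<close>
definition code_dim :: "('i \<Rightarrow> bit) set \<Rightarrow> nat \<Rightarrow> bool" where
  "code_dim Cd k \<longleftrightarrow> (\<exists>Bs. finite Bs \<and> card Bs = k \<and> Bs \<subseteq> Cd \<and>
      (\<forall>S\<subseteq>Bs. sum id S = 0 \<longrightarrow> S = {}) \<and>
      (\<forall>c\<in>Cd. \<exists>S\<subseteq>Bs. c = sum id S))"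

definition wt :: "'i set \<Rightarrow> ('i \<Rightarrow> bit) \<Rightarrow> nat" where
  "wt I c = card {j\<in>I. c j \<noteq> 0}"

definition min_dist :: "'i set \<Rightarrow> ('i \<Rightarrow> bit) set \<Rightarrow> nat \<Rightarrow> bool" where
  "min_dist I Cd d \<longleftrightarrow> (\<exists>c\<in>Cd. c \<noteq> 0 \<and> wt I c = d) \<and> (\<forall>c\<in>Cd. c \<noteq> 0 \<longrightarrow> d \<le> wt I c)"

definition is_code_nkd :: "'i set \<Rightarrow> ('i \<Rightarrow> bit) set \<Rightarrow> nat \<Rightarrow> nat \<Rightarrow> nat \<Rightarrow> bool" where
  "is_code_nkd I Cd n k d \<longleftrightarrow> bin_linear_code I Cd \<and> card I = n \<and> code_dim Cd k \<and> min_dist I Cd d"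

text \<open>An [n,k,d] code is distance-optimal if no binary linear [n,k,d+1] code exists
(coordinates taken, w.l.o.g., as {0..<n}).\<close>
definition distance_optimal :: "nat \<Rightarrow> nat \<Rightarrow> nat \<Rightarrow> bool" where
  "distance_optimal n k d \<longleftrightarrow> \<not> (\<exists>Cd :: (nat \<Rightarrow> bit) set. is_code_nkd {..<n} Cd n k (d + 1))"

end

theory Submission
  imports Defs "HOL-Library.Product_Plus"
begin

declare add_bit_eq_xor[simp del] mult_bit_eq_and[simp del]
lemma bit_add_self[simp]: "(x::bit) + x = 0" by (cases x) simp_all
lemma fun_add_self[simp]: "(f::'i\<Rightarrow>bit) + f = 0" by (simp add: fun_eq_iff)
lemma col_add_self[simp]: "(c::col3) + c = 0" by (simp add: prod_eq_iff)
lemma bit_of_nat: "of_nat n = (0::bit) \<longleftrightarrow> even n" 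
proof (induct n)
  case (Suc n) then show ?case by (cases "of_nat n :: bit") (auto simp: add.commute)
qed simp

lemma sum_closed:
  assumes "finite S" "0 \<in> G" "\<And>x y. x \<in> G \<Longrightarrow> y \<in> G \<Longrightarrow> x + y \<in> G" "\<And>x. x \<in> S \<Longrightarrow> f x \<in> G"
  shows "sum f S \<in> G"
  using assms(1,4) by (induct S rule: finite_induct) (auto intro: assms(2,3))

lemma char2_eq: 
  fixes x y :: "'a::ab_group_add"
  assumes h2: "\<And>z::'a. z + z = 0" and "x + y = 0" shows "x = y"
proof -
  have "x = x + (y + y)" using h2 by simp
  also have "\<dots> = (x + y) + y" by (simp add: add.assoc)
  finally show ?thesis using assms(2) by simp
qed

lemma subset_sum_inj:
  fixes Bs :: "'a::ab_group_add set"
  assumes h2: "\<And>z::'a. z + z = 0" and fin: "finite Bs"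
    and ind: "\<forall>S\<subseteq>Bs. sum id S = 0 \<longrightarrow> S = {}"
    and "S \<subseteq> Bs" "T \<subseteq> Bs" "sum id S = sum id T"
  shows "S = T"
proof -
  have fS: "finite S" "finite T" using assms(4,5) fin finite_subset by auto
  have e1: "sum id S = sum id (S \<inter> T) + sum id (S - T)"
    using fS(1) by (rule sum.Int_Diff)
  have e2: "sum id T = sum id (S \<inter> T) + sum id (T - S)"
    using sum.Int_Diff[OF fS(2), of id S] by (simp add: Int_commute)
  have "sum id (S \<inter> T) + sum id (S - T) = sum id (S \<inter> T) + sum id (T - S)"
    using e1 e2 assms(6) by (simp only:)
  then have e3: "sum id (S - T) = sum id (T - S)" by (simp only: add_left_cancel)
  have "sum id ((S - T) \<union> (T - S)) = sum id (S - T) + sum id (T - S)"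
    using fS by (intro sum.union_disjoint) auto
  also have "\<dots> = 0" using e3 h2 by simp
  finally have z: "sum id ((S - T) \<union> (T - S)) = 0" .
  have sub: "(S - T) \<union> (T - S) \<subseteq> Bs" using assms(4,5) by blast
  have "(S - T) \<union> (T - S) = {}" by (rule ind[rule_format, OF sub z])
  then show ?thesis by blast
qed

lemma code_dim_card:
  fixes Cd :: "('i\<Rightarrow>bit) set"
  assumes h2: "\<And>z::'i\<Rightarrow>bit. z + z = 0" and cd: "code_dim Cd k" and z: "0 \<in> Cd"
    and cl: "\<And>x y. x \<in> Cd \<Longrightarrow> y \<in> Cd \<Longrightarrow> x + y \<in> Cd"
  shows "card Cd = 2 ^ k"
proof -
  obtain Bs where B: "finite Bs" "card Bs = k" "Bs \<subseteq> Cd" "\<forall>S\<subseteq>Bs. sum id S = 0 \<longrightarrow> S = {}"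
    "\<forall>c\<in>Cd. \<exists>S\<subseteq>Bs. c = sum id S" using cd unfolding code_dim_def by blast
  have "bij_betw (sum id) (Pow Bs) Cd"
  proof (rule bij_betw_imageI)
    show "inj_on (sum id) (Pow Bs)"
      using subset_sum_inj[OF h2 B(1) B(4)] by (auto simp: inj_on_def)
    show "sum id ` Pow Bs = Cd"
    proof
      show "sum id ` Pow Bs \<subseteq> Cd"
        using B(1,3) by (auto intro!: sum_closed[OF _ z cl] intro: finite_subset)
      show "Cd \<subseteq> sum id ` Pow Bs" using B(5) by blast
    qed
  qed
  then have "card Cd = card (Pow Bs)" by (simp add: bij_betw_same_card)
  then show ?thesis using B(1,2) by (simp add: card_Pow)
qed

lemma card_code_dim:
  fixes Cd :: "('i\<Rightarrow>bit) set"
  assumes h2: "\<And>z::'i\<Rightarrow>bit. z + z = 0" and fin: "finite Cd" and z: "0 \<in> Cd"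
    and cl: "\<And>x y. x \<in> Cd \<Longrightarrow> y \<in> Cd \<Longrightarrow> x + y \<in> Cd" and c: "card Cd = 2 ^ k"
  shows "code_dim Cd k"
proof -
  define Ind where "Ind = {Bs. Bs \<subseteq> Cd \<and> (\<forall>S\<subseteq>Bs. sum id S = 0 \<longrightarrow> S = {})}"
  have "Ind \<subseteq> Pow Cd" unfolding Ind_def by blast
  then have fI: "finite Ind" using fin by (simp add: finite_subset)
  have "{} \<in> Ind" unfolding Ind_def by simp
  define M where "M = Max (card ` Ind)"
  have "M \<in> card ` Ind" unfolding M_def using \<open>{} \<in> Ind\<close> by (intro Max_in finite_imageI fI) blast
  then obtain Bs where Bs: "Bs \<in> Ind" "card Bs = M" by auto
  have maxi: "card Bs' \<le> M" if "Bs' \<in> Ind" for Bs' unfolding M_def by (intro Max_ge finite_imageI fI imageI that)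
  have BC: "Bs \<subseteq> Cd" and ind: "\<forall>S\<subseteq>Bs. sum id S = 0 \<longrightarrow> S = {}" using Bs(1) unfolding Ind_def by simp_all
  have fB: "finite Bs" using finite_subset[OF BC fin] .
  have span: "\<forall>c\<in>Cd. \<exists>S\<subseteq>Bs. c = sum id S"
  proof (rule ccontr)
    assume "\<not> ?thesis"
    then obtain c where c: "c \<in> Cd" "\<forall>S\<subseteq>Bs. c \<noteq> sum id S" by blast
    have cB: "c \<notin> Bs"
    proof
      assume "c \<in> Bs"
      then have "{c} \<subseteq> Bs" by simp
      from c(2)[rule_format, OF this] show False by simp
    qed
    have "insert c Bs \<in> Ind" unfolding Ind_def
    proof (intro CollectI conjI allI impI)
      show "insert c Bs \<subseteq> Cd" using c BC by simp
      fix S assume S: "S \<subseteq> insert c Bs" "sum id S = 0"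
      show "S = {}"
      proof (cases "c \<in> S")
        case True
        have fS: "finite S" using S(1) fB by (meson finite_insert finite_subset)
        have "sum id S = c + sum id (S - {c})" using True fS by (simp add: sum.remove)
        then have "c + sum id (S - {c}) = 0" using S(2) by simp
        then have eqc: "c = sum id (S - {c})" by (rule char2_eq[OF h2])
        have "S - {c} \<subseteq> Bs" using S(1) by blast
        from c(2)[rule_format, OF this] eqc show ?thesis by simp
      next
        case False
        then have "S \<subseteq> Bs" using S(1) by blast
        from ind[rule_format, OF this S(2)] show ?thesis .
      qed
    qed
    then have "card (insert c Bs) \<le> M" by (rule maxi)
    moreover have "card (insert c Bs) = Suc (card Bs)" using fB cB by simp
    ultimately show False using Bs(2) by simp
  qed
  have "code_dim Cd (card Bs)" unfolding code_dim_def
    by (rule exI[of _ Bs]) (intro conjI refl fB BC ind span)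
  then have "card Cd = 2 ^ card Bs" by (rule code_dim_card[OF h2 _ z cl])
  then have "card Bs = k" using c by simp
  then show ?thesis using \<open>code_dim Cd (card Bs)\<close> by simp
qed

lemma kernel_count:
  fixes G :: "'a::ab_group_add set" and F :: "'a \<Rightarrow> 'b::ab_group_add"
  assumes h2: "\<And>z::'a. z + z = 0" and fin: "finite G"
    and cl: "\<And>x y. x \<in> G \<Longrightarrow> y \<in> G \<Longrightarrow> x + y \<in> G"
    and Fadd: "\<And>x y. x \<in> G \<Longrightarrow> y \<in> G \<Longrightarrow> F (x + y) = F x + F y"
  shows "card G = card {x\<in>G. F x = 0} * card (F ` G)"
proof -
  let ?K = "{x\<in>G. F x = 0}"
  have G: "G = (\<Union>v\<in>F ` G. {x\<in>G. F x = v})" by blast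
  have "card (\<Union>v\<in>F ` G. {x\<in>G. F x = v}) = (\<Sum>v\<in>F ` G. card {x\<in>G. F x = v})"
  proof (rule card_UN_disjoint)
    show "finite (F ` G)" using fin by simp
    show "\<forall>i\<in>F ` G. finite {x \<in> G. F x = i}" using fin by simp
    show "\<forall>i\<in>F ` G. \<forall>j\<in>F ` G. i \<noteq> j \<longrightarrow> {x \<in> G. F x = i} \<inter> {x \<in> G. F x = j} = {}" by blast
  qed
  then have "card G = (\<Sum>v\<in>F ` G. card {x\<in>G. F x = v})" using G by simp
  also have "\<dots> = (\<Sum>v\<in>F ` G. card ?K)"
  proof (rule sum.cong[OF refl])
    fix v assume "v \<in> F ` G"
    then obtain x0 where x0: "x0 \<in> G" "F x0 = v" by blast
    have z0: "0 \<in> G" using cl[OF x0(1) x0(1)] h2[of x0] by simp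
    have "F 0 + F 0 = F 0 + 0" using Fadd[OF z0 z0] by simp
    then have F0: "F 0 = 0" by (simp only: add_left_cancel)
    have vv: "v + v = 0" using Fadd[OF x0(1) x0(1)] h2[of x0] F0 x0(2) by simp
    have "bij_betw (\<lambda>x. x + x0) ?K {x\<in>G. F x = v}"
    proof (rule bij_betw_byWitness[where f'="\<lambda>x. x + x0"])
      show "\<forall>a\<in>?K. a + x0 + x0 = a" using h2 by (simp add: add.assoc)
      show "\<forall>a\<in>{x\<in>G. F x = v}. a + x0 + x0 = a" using h2 by (simp add: add.assoc)
      show "(\<lambda>x. x + x0) ` ?K \<subseteq> {x\<in>G. F x = v}"
      proof
        fix y assume "y \<in> (\<lambda>x. x + x0) ` ?K"
        then obtain x where x: "x \<in> G" "F x = 0" "y = x + x0" by blast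
        have "F y = v" using Fadd[OF x(1) x0(1)] x x0 by simp
        moreover have "y \<in> G" using cl[OF x(1) x0(1)] x by simp
        ultimately show "y \<in> {x\<in>G. F x = v}" by simp
      qed
      show "(\<lambda>x. x + x0) ` {x\<in>G. F x = v} \<subseteq> ?K"
      proof
        fix y assume "y \<in> (\<lambda>x. x + x0) ` {x\<in>G. F x = v}"
        then obtain x where x: "x \<in> G" "F x = v" "y = x + x0" by blast
        have "F y = v + v" using Fadd[OF x(1) x0(1)] x x0 by simp
        then have "F y = 0" using vv by simp
        moreover have "y \<in> G" using cl[OF x(1) x0(1)] x by simp
        ultimately show "y \<in> ?K" by simp
      qed
    qed
    then show "card {x\<in>G. F x = v} = card ?K" by (simp add: bij_betw_same_card)
  qed
  also have "\<dots> = card ?K * card (F ` G)" by simp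
  finally show ?thesis .
qed

lemma card_words_gen:
  assumes "finite I"
  shows "card {v::'i\<Rightarrow>bit. \<forall>j. j \<notin> I \<longrightarrow> v j = 0} = 2 ^ card I"
proof -
  have "bij_betw (\<lambda>v. {j. v j \<noteq> 0}) {v::'i\<Rightarrow>bit. \<forall>j. j \<notin> I \<longrightarrow> v j = 0} (Pow I)"
  proof (rule bij_betw_byWitness[where f'="\<lambda>S j. if j \<in> S then 1 else 0"])
    show "\<forall>a\<in>{v::'i\<Rightarrow>bit. \<forall>j. j \<notin> I \<longrightarrow> v j = 0}. (\<lambda>j. if j \<in> {j. a j \<noteq> 0} then 1 else 0) = a"
      by (auto simp: fun_eq_iff)
    show "\<forall>a'\<in>Pow I. {j. (if j \<in> a' then 1 else 0) \<noteq> (0::bit)} = a'" by auto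
  qed auto
  then show ?thesis using assms by (simp add: bij_betw_same_card card_Pow)
qed



definition unitv :: "nat \<Rightarrow> nat \<Rightarrow> bit" where "unitv i = (\<lambda>x. if x = i then 1 else 0)"
definition Fcol :: "col3 set \<Rightarrow> (col3 \<Rightarrow> bit) \<Rightarrow> col3" where
  "Fcol N y = (\<Sum>c\<in>N. if y c = 0 then 0 else c)"
definition V3 :: "nat \<Rightarrow> col3 set" where "V3 m = vecs m \<times> vecs m \<times> vecs m"

lemma bit_add_eq_1[simp]: "x + y = (1::bit) \<longleftrightarrow> (x = 1 \<longleftrightarrow> y = 0)"
  by (cases x; cases y) simp_all
lemma zero_col: "(0::col3) = (0,0,0)" by (simp add: zero_prod_def)
lemma unitv_sum: "i \<in> {1..m} \<Longrightarrow> (\<Sum>k\<in>{1..m}. unitv i k * f k) = f i"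
proof -
  assume i: "i \<in> {1..m}"
  have "(\<Sum>k\<in>{1..m}. unitv i k * f k) = (\<Sum>k\<in>{1..m}. if k = i then f k else 0)"
    by (rule sum.cong) (auto simp: unitv_def)
  then show ?thesis using i by simp
qed
lemma unitv_sum': "i \<in> {1..m} \<Longrightarrow> (\<Sum>k\<in>{Suc 0..m}. unitv i k * f k) = f i"
  using unitv_sum by simp
lemma Delta_alt: "P \<subseteq> {1..m} \<Longrightarrow> Delta m P = {v. \<forall>j. j \<notin> P \<longrightarrow> v j = 0}"
  unfolding Delta_def vecs_def supp_def by (auto; metis atLeastAtMost_iff subsetD zero_neq_one)
lemma vecs_alt: "vecs m = {v. \<forall>j. j \<notin> {1..m} \<longrightarrow> v j = 0}"
  unfolding vecs_def by auto
lemma vecs_Delta: "vecs m = Delta m {1..m}"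
  unfolding Delta_def vecs_def supp_def by auto
lemma card_Delta: "P \<subseteq> {1..m} \<Longrightarrow> card (Delta m P) = 2 ^ card P"
  using card_words_gen[of P] finite_subset[of P "{1..m}"] by (simp add: Delta_alt)
lemma card_vecs: "card (vecs m) = 2 ^ m"
  using card_Delta[of "{1..m}" m] by (simp add: vecs_Delta)
lemma finite_vecs: "finite (vecs m)"
  using card_vecs by (metis card_ge_0_finite zero_less_numeral zero_less_power)
lemma finite_Delta: "finite (Delta m P)"
  unfolding Delta_def using finite_vecs by simp
lemma Delta_sub: "Delta m P \<subseteq> vecs m" unfolding Delta_def by auto
lemma Delta_add: "u \<in> Delta m P \<Longrightarrow> v \<in> Delta m P \<Longrightarrow> u + v \<in> Delta m P"
  unfolding Delta_def vecs_def supp_def by auto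
lemma Delta_zero: "0 \<in> Delta m P"
  unfolding Delta_def vecs_def supp_def by auto
lemma vecs_add: "u \<in> vecs m \<Longrightarrow> v \<in> vecs m \<Longrightarrow> u + v \<in> vecs m"
  unfolding vecs_def by auto
lemma vecs_zero: "0 \<in> vecs m"
  unfolding vecs_def by auto
lemma unitv_Delta: "i \<in> P \<Longrightarrow> P \<subseteq> {1..m} \<Longrightarrow> unitv i \<in> Delta m P"
  unfolding Delta_def vecs_def supp_def unitv_def by auto
lemma unitv_vecs: "i \<in> {1..m} \<Longrightarrow> unitv i \<in> vecs m"
  unfolding vecs_def unitv_def by auto
lemma card_words: "finite I \<Longrightarrow> card (words I) = 2 ^ card I"
  unfolding words_def by (rule card_words_gen)
lemma finite_words: "finite I \<Longrightarrow> finite (words I)"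
  using card_words by (metis card_ge_0_finite zero_less_numeral zero_less_power)
lemma words_add: "u \<in> words I \<Longrightarrow> v \<in> words I \<Longrightarrow> u + v \<in> words I"
  unfolding words_def by auto

lemma ip3_add: "ip3 m x (c + d) = ip3 m x c + ip3 m x d"
  unfolding ip3_def by (simp add: distrib_left sum.distrib[symmetric] ac_simps)
lemma ip3_zero: "ip3 m x 0 = 0"
  unfolding ip3_def by simp
lemma ip3_sum: "finite S \<Longrightarrow> ip3 m x (sum f S) = (\<Sum>c\<in>S. ip3 m x (f c))"
  by (induct S rule: finite_induct) (simp_all add: ip3_add ip3_zero)

lemma Fcol_add: "Fcol N (y + z) = Fcol N y + Fcol N z"
  unfolding Fcol_def sum.distrib[symmetric]
proof (rule sum.cong[OF refl])
  fix c show "(if (y + z) c = 0 then 0 else c) = (if y c = 0 then 0 else c) + (if z c = 0 then 0 else c)"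
    by (cases "y c"; cases "z c") simp_all
qed

lemma Fcol_V3: "finite N \<Longrightarrow> N \<subseteq> V3 m \<Longrightarrow> Fcol N y \<in> V3 m"
  unfolding Fcol_def
  by (rule sum_closed) (auto simp: V3_def vecs_add vecs_zero zero_col)

lemma ip3_nondeg:
  assumes v: "v \<in> V3 m" and h: "\<forall>x\<in>V3 m. ip3 m x v = 0"
  shows "v = 0"
proof -
  obtain a b c where abc: "v = (a, b, c)" by (cases v)
  have av: "a \<in> vecs m" "b \<in> vecs m" "c \<in> vecs m" using v abc by (auto simp: V3_def)
  have "a i = 0 \<and> b i = 0 \<and> c i = 0" for i
  proof (cases "i \<in> {1..m}")
    case True
    have "ip3 m (unitv i, 0, 0) v = a i" 
      unfolding ip3_def abc using True by (simp add: unitv_sum')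
    moreover have "ip3 m (0, unitv i, 0) v = b i" 
      unfolding ip3_def abc using True by (simp add: unitv_sum')
    moreover have "ip3 m (0, 0, unitv i) v = c i" 
      unfolding ip3_def abc using True by (simp add: unitv_sum')
    ultimately show ?thesis using h True unitv_vecs[OF True] vecs_zero
      by (metis V3_def mem_Times_iff fst_conv snd_conv)
  next
    case False then show ?thesis using av by (auto simp: vecs_def)
  qed
  then show ?thesis using abc by (auto simp: fun_eq_iff zero_col)
qed

lemma dual_eq:
  assumes fin: "finite N" and NV: "N \<subseteq> V3 m"
  shows "dual_code N (col_code m N) = {y \<in> words N. Fcol N y = 0}"
proof -
  have key: "(\<Sum>j\<in>N. y j * (if j \<in> N then ip3 m x j else 0)) = ip3 m x (Fcol N y)" for y x
  proof -
    have "(\<Sum>j\<in>N. y j * (if j \<in> N then ip3 m x j else 0)) = (\<Sum>j\<in>N. ip3 m x (if y j = 0 then 0 else j))"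
    proof (rule sum.cong[OF refl])
      fix j assume "j \<in> N" then show "y j * (if j \<in> N then ip3 m x j else 0) = ip3 m x (if y j = 0 then 0 else j)"
        by (cases "y j") (simp_all add: ip3_zero)
    qed
    also have "\<dots> = ip3 m x (Fcol N y)" unfolding Fcol_def by (simp add: ip3_sum[OF fin])
    finally show ?thesis .
  qed
  show ?thesis
  proof (intro set_eqI iffI)
    fix y assume y: "y \<in> dual_code N (col_code m N)"
    then have "y \<in> words N" by (simp add: dual_code_def)
    moreover have "\<forall>x\<in>V3 m. ip3 m x (Fcol N y) = 0"
    proof
      fix x assume "x \<in> V3 m"
      then have "(\<lambda>c. if c \<in> N then ip3 m x c else 0) \<in> col_code m N" 
        unfolding col_code_def V3_def by blast
      moreover have "\<forall>c\<in>col_code m N. (\<Sum>j\<in>N. y j * c j) = 0"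
        using y unfolding dual_code_def by blast
      ultimately have "(\<Sum>j\<in>N. y j * (\<lambda>c. if c \<in> N then ip3 m x c else 0) j) = 0"
        by (rule bspec[rotated])
      then show "ip3 m x (Fcol N y) = 0" using key[of y x] by simp
    qed
    ultimately show "y \<in> {y \<in> words N. Fcol N y = 0}" using ip3_nondeg[OF Fcol_V3[OF fin NV]] by blast
  next
    fix y assume "y \<in> {y \<in> words N. Fcol N y = 0}"
    then show "y \<in> dual_code N (col_code m N)"
      unfolding dual_code_def col_code_def using key by (auto simp: ip3_zero)
  qed
qed



definition hyp :: "nat \<Rightarrow> nat set \<Rightarrow> nat set \<Rightarrow> nat set \<Rightarrow> bool" where
  "hyp m A B C \<longleftrightarrow> m \<ge> 2 \<and> A \<noteq> {} \<and> A \<subseteq> {1..m} \<and> B \<noteq> {} \<and> B \<subseteq> {1..m} \<and> C \<noteq> {}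
     \<and> C \<subseteq> {1..m} \<and> A \<inter> B = {} \<and> card C = m - 1 \<and> card A \<ge> 2"

lemma sum_fun_apply: "(sum f S) x = (\<Sum>a\<in>S. f a x)"
  by (induct S rule: infinite_finite_induct) auto

lemma fun_add_self2[simp]: "(f::'i\<Rightarrow>bit) + (f + g) = g"
  by (simp add: add.assoc[symmetric])

lemma missing_j:
  assumes "hyp m A B C" obtains j where "j \<in> {1..m}" "C = {1..m} - {j}"
proof -
  have C: "C \<subseteq> {1..m}" "card C = m - 1" "m \<ge> 2" using assms by (auto simp: hyp_def)
  have "card ({1..m} - C) = 1" using C by (simp add: card_Diff_subset finite_subset)
  then obtain j where j: "{1..m} - C = {j}" by (rule card_1_singletonE)
  have "j \<in> {1..m}" using j by blast
  moreover have "C = {1..m} - {j}" using j C by blast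
  ultimately show ?thesis using that by blast
qed

lemma DeltaC_iff:
  assumes "j \<in> {1..m}" "C = {1..m} - {j}"
  shows "w \<in> DeltaC m C \<longleftrightarrow> w \<in> vecs m \<and> w j = 1"
  using assms unfolding DeltaC_def Delta_def vecs_def supp_def by auto

lemma DeltaS_iff: "w \<in> DeltaS m P \<longleftrightarrow> w \<in> Delta m P \<and> w \<noteq> 0"
  unfolding DeltaS_def by auto

lemma DeltaS_sub: "DeltaS m P \<subseteq> Delta m P" unfolding DeltaS_def by auto
lemma DeltaC_sub: "DeltaC m P \<subseteq> vecs m" unfolding DeltaC_def by auto

lemma Delta_mono: "P \<subseteq> Q \<Longrightarrow> Delta m P \<subseteq> Delta m Q"
  unfolding Delta_def by auto

definition gpar :: "(nat \<Rightarrow> bit) \<times> (nat \<Rightarrow> bit) \<times> (nat \<Rightarrow> bit) \<times> bool \<Rightarrow> col3" where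
  "gpar = (\<lambda>(w1,w2,w3,\<beta>). (w2 + (if \<beta> then w1 else 0), w3, w1))"

lemma N4_param: "N4 m A B C = gpar ` (DeltaS m A \<times> Delta m B \<times> DeltaC m C \<times> (UNIV::bool set))"
proof (intro set_eqI iffI)
  fix x assume "x \<in> N4 m A B C"
  then obtain w1 w2 w3 \<omega> where x: "x = (w2 + \<omega>, w3, w1)" "w1 \<in> DeltaS m A" "w2 \<in> Delta m B"
    "w3 \<in> DeltaC m C" "\<omega> \<in> {0, w1}" unfolding N4_def by blast
  show "x \<in> gpar ` (DeltaS m A \<times> Delta m B \<times> DeltaC m C \<times> (UNIV::bool set))"
  proof (cases "\<omega> = 0")
    case True then show ?thesis using x by (auto simp: gpar_def image_iff intro!: bexI[where x="(w1,w2,w3,False)"])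
  next
    case False then have "\<omega> = w1" using x by auto
    then show ?thesis using x by (auto simp: gpar_def image_iff intro!: bexI[where x="(w1,w2,w3,True)"])
  qed
next
  fix x assume "x \<in> gpar ` (DeltaS m A \<times> Delta m B \<times> DeltaC m C \<times> (UNIV::bool set))"
  then obtain w1 w2 w3 \<beta> where x: "x = (w2 + (if \<beta> then w1 else 0), w3, w1)" "w1 \<in> DeltaS m A" "w2 \<in> Delta m B"
    "w3 \<in> DeltaC m C" by (auto simp: gpar_def)
  show "x \<in> N4 m A B C" unfolding N4_def using x by (intro CollectI exI[of _ w1] exI[of _ w2] exI[of _ w3] exI[of _ "if \<beta> then w1 else 0"]) auto
qed

lemma gpar_inj:
  assumes "A \<inter> B = {}"
  shows "inj_on gpar (DeltaS m A \<times> Delta m B \<times> DeltaC m C \<times> (UNIV::bool set))"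
proof (rule inj_onI)
  fix x y assume x: "x \<in> DeltaS m A \<times> Delta m B \<times> DeltaC m C \<times> (UNIV::bool set)"
    and y: "y \<in> DeltaS m A \<times> Delta m B \<times> DeltaC m C \<times> (UNIV::bool set)" and e: "gpar x = gpar y"
  obtain w1 w2 w3 \<beta> where xx: "x = (w1,w2,w3,\<beta>)" by (cases x) auto
  obtain v1 v2 v3 \<gamma> where yy: "y = (v1,v2,v3,\<gamma>)" by (cases y) auto
  have e1: "w1 = v1" "w3 = v3" and e2: "w2 + (if \<beta> then w1 else 0) = v2 + (if \<gamma> then w1 else 0)"
    using e by (auto simp: xx yy gpar_def)
  have w1: "w1 \<noteq> 0" "supp w1 \<subseteq> A" using x xx by (auto simp: DeltaS_def Delta_def)
  have w2: "supp w2 \<subseteq> B" "supp v2 \<subseteq> B" using x xx y yy by (auto simp: Delta_def)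
  have "\<beta> = \<gamma>"
  proof (rule ccontr)
    assume ne: "\<beta> \<noteq> \<gamma>"
    obtain i where i: "w1 i = 1" using w1(1) by (auto simp: fun_eq_iff)
    then have "i \<in> A" using w1(2) by (auto simp: supp_def)
    then have "w2 i = 0" "v2 i = 0" using w2 assms by (auto simp: supp_def)
    moreover have "w2 i + (if \<beta> then w1 i else 0) = v2 i + (if \<gamma> then w1 i else 0)"
      using fun_cong[OF e2, of i] by (auto split: if_splits)
    ultimately show False using ne i by (cases \<beta>; cases \<gamma>) auto
  qed
  then have "w2 = v2" using e2 by (metis add_right_cancel)
  then show "x = y" using xx yy e1 \<open>\<beta> = \<gamma>\<close> by simp
qed

lemma card_N4:
  assumes h: "hyp m A B C"
  shows "card (N4 m A B C) = 2 ^ (m + card A + card B) - 2 ^ (m + card B)"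
proof -
  obtain j where j: "j \<in> {1..m}" "C = {1..m} - {j}" using missing_j[OF h] by blast
  have hA: "A \<subseteq> {1..m}" "B \<subseteq> {1..m}" "A \<inter> B = {}" "m \<ge> 2" "C \<subseteq> {1..m}" "card C = m - 1"
    using h by (auto simp: hyp_def)
  have cS: "card (DeltaS m A) = 2 ^ card A - 1"
    unfolding DeltaS_def using card_Delta[OF hA(1)] Delta_zero finite_Delta by (simp add: card_Diff_singleton)
  have "m = Suc (m - 1)" using hA(4) by simp
  then have pm: "(2::nat) ^ m = 2 * 2 ^ (m - 1)" by (metis power_Suc)
  have cC: "card (DeltaC m C) = 2 ^ (m - 1)"
  proof -
    have "card (DeltaC m C) = card (vecs m) - card (Delta m C)"
      unfolding DeltaC_def using Delta_sub finite_Delta by (simp add: card_Diff_subset)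
    also have "\<dots> = 2 ^ m - 2 ^ (m - 1)" using card_vecs card_Delta[OF hA(5)] hA(6) by simp
    also have "\<dots> = 2 ^ (m - 1)" using pm by simp
    finally show ?thesis .
  qed
  have "card (N4 m A B C) = card (DeltaS m A \<times> Delta m B \<times> DeltaC m C \<times> (UNIV::bool set))"
    unfolding N4_param by (rule card_image[OF gpar_inj[OF hA(3)]])
  also have "\<dots> = (2 ^ card A - 1) * 2 ^ card B * 2 ^ (m - 1) * 2"
    using cS cC card_Delta[OF hA(2)] by (simp add: card_cartesian_product)
  also have "\<dots> = (2 ^ card A - 1) * 2 ^ card B * 2 ^ m"
    using pm by simp
  also have "\<dots> = 2 ^ (m + card A + card B) - 2 ^ (m + card B)"
    by (simp add: diff_mult_distrib power_add algebra_simps)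
  finally show ?thesis .
qed

lemma N4_parts:
  assumes "c \<in> N4 m A B C"
  shows "fst c \<in> Delta m (A \<union> B)" "fst (snd c) \<in> DeltaC m C" "snd (snd c) \<in> DeltaS m A"
proof -
  obtain w1 w2 w3 \<beta> where x: "c = (w2 + (if \<beta> then w1 else 0), w3, w1)" "w1 \<in> DeltaS m A" "w2 \<in> Delta m B"
    "w3 \<in> DeltaC m C" using assms unfolding N4_param by (auto simp: gpar_def)
  have "w1 \<in> Delta m (A \<union> B)" "w2 \<in> Delta m (A \<union> B)"
    using x Delta_mono[of A "A \<union> B" m] Delta_mono[of B "A \<union> B" m] by (auto simp: DeltaS_def)
  then show "fst c \<in> Delta m (A \<union> B)" using x by (auto intro: Delta_add Delta_zero)
  show "fst (snd c) \<in> DeltaC m C" "snd (snd c) \<in> DeltaS m A" using x by auto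
qed

lemma finite_N4: "finite (N4 m A B C)"
  unfolding N4_param using finite_Delta
  by (intro finite_imageI finite_cartesian_product) (auto simp: DeltaS_def DeltaC_def finite_vecs)



definition Vsp :: "nat \<Rightarrow> nat set \<Rightarrow> nat set \<Rightarrow> col3 set" where
  "Vsp m A B = Delta m (A \<union> B) \<times> vecs m \<times> Delta m A"

lemma Fcol_zero: "Fcol N 0 = 0" unfolding Fcol_def by simp

lemma Fcol_single: "finite N \<Longrightarrow> c \<in> N \<Longrightarrow> Fcol N (\<lambda>x. if x = c then 1 else 0) = c"
proof -
  assume "finite N" "c \<in> N"
  have "Fcol N (\<lambda>x. if x = c then 1 else 0) = (\<Sum>x\<in>N. if x = c then x else 0)"
    unfolding Fcol_def by (rule sum.cong) auto
  then show ?thesis using \<open>finite N\<close> \<open>c \<in> N\<close> by simp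
qed

lemma Fcol_supp: "finite N \<Longrightarrow> Fcol N y = sum id {x\<in>N. y x \<noteq> 0}"
  unfolding Fcol_def by (simp only: sum.inter_filter) (rule sum.cong, auto)

lemma N4_Vsp: "c \<in> N4 m A B C \<Longrightarrow> c \<in> Vsp m A B"
proof -
  assume c: "c \<in> N4 m A B C"
  have "fst c \<in> Delta m (A \<union> B)" "fst (snd c) \<in> vecs m" "snd (snd c) \<in> Delta m A"
    using N4_parts[OF c] DeltaC_sub[of m C] DeltaS_sub[of m A] by auto
  then show ?thesis unfolding Vsp_def by (cases c) auto
qed

lemma image_sub:
  assumes h: "hyp m A B C"
  shows "Fcol (N4 m A B C) ` words (N4 m A B C) \<subseteq> Vsp m A B"
proof
  fix v assume "v \<in> Fcol (N4 m A B C) ` words (N4 m A B C)"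
  then obtain y where v: "v = Fcol (N4 m A B C) y" by auto
  show "v \<in> Vsp m A B" unfolding v Fcol_def
    by (rule sum_closed[OF finite_N4]) 
       (auto simp: Vsp_def zero_col Delta_zero vecs_zero Delta_add vecs_add dest: N4_Vsp)
qed



lemma image_sup:
  assumes h: "hyp m A B C"
  shows "Vsp m A B \<subseteq> Fcol (N4 m A B C) ` words (N4 m A B C)"
proof -
  let ?N = "N4 m A B C"
  let ?I = "Fcol ?N ` words ?N"
  obtain j where j: "j \<in> {1..m}" "C = {1..m} - {j}" using missing_j[OF h] by blast
  have hA: "A \<subseteq> {1..m}" "B \<subseteq> {1..m}" "A \<inter> B = {}" "card A \<ge> 2"
    using h by (auto simp: hyp_def)
  have fA: "finite A" using hA(1) finite_subset by blast
  obtain a where a: "a \<in> A" using hA(4) by (metis card.empty ex_in_conv not_numeral_le_zero)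
  have "card (A - {a}) \<ge> 1" using hA(4) fA a by (simp add: card_Diff_singleton)
  then have "A - {a} \<noteq> {}" by (metis card.empty not_one_le_zero)
  then obtain a' where a': "a' \<in> A - {a}" by blast
  have aa: "a \<in> A" "a' \<in> A" "a \<noteq> a'" using a a' by auto
  have I0: "0 \<in> ?I"
  proof (rule image_eqI)
    show "0 = Fcol ?N 0" by (simp add: Fcol_zero)
    show "(0::col3\<Rightarrow>bit) \<in> words ?N" by (simp add: words_def)
  qed
  have Iadd: "x + y \<in> ?I" if xI: "x \<in> ?I" and yI: "y \<in> ?I" for x y
  proof -
    obtain y1 where y1: "y1 \<in> words ?N" "x = Fcol ?N y1" using xI by blast
    obtain y2 where y2: "y2 \<in> words ?N" "y = Fcol ?N y2" using yI by blast
    show ?thesis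
    proof (rule image_eqI)
      show "x + y = Fcol ?N (y1 + y2)" using y1 y2 by (simp add: Fcol_add)
      show "y1 + y2 \<in> words ?N" by (rule words_add[OF y1(1) y2(1)])
    qed
  qed
  have Icol: "c \<in> ?I" if "c \<in> ?N" for c
  proof (rule image_eqI)
    show "c = Fcol ?N (\<lambda>x. if x = c then 1 else 0)" by (rule Fcol_single[OF finite_N4 that, symmetric])
    show "(\<lambda>x. if x = c then 1 else 0) \<in> words ?N" using that by (auto simp: words_def)
  qed
  have col0: "(u, w3, w1) \<in> ?I" if "w1 \<in> DeltaS m A" "u \<in> Delta m B" "w3 \<in> DeltaC m C" for u w3 w1
  proof (rule Icol)
    show "(u, w3, w1) \<in> ?N" unfolding N4_def
      by (rule CollectI, rule exI[of _ w1], rule exI[of _ u], rule exI[of _ w3], rule exI[of _ 0]) (simp add: that)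
  qed
  have col1: "(w2 + w1, w3, w1) \<in> ?I" if "w1 \<in> DeltaS m A" "w2 \<in> Delta m B" "w3 \<in> DeltaC m C" for w2 w3 w1
  proof (rule Icol)
    show "(w2 + w1, w3, w1) \<in> ?N" unfolding N4_def
      by (rule CollectI, rule exI[of _ w1], rule exI[of _ w2], rule exI[of _ w3], rule exI[of _ w1]) (simp add: that)
  qed
  define ej where "ej = unitv j"
  define ea where "ea = unitv a"
  define eb where "eb = unitv a'"
  have ejC: "ej \<in> DeltaC m C" using j by (simp add: DeltaC_iff ej_def unitv_vecs) (simp add: unitv_def)
  have "ea \<in> Delta m A" unfolding ea_def by (rule unitv_Delta[OF aa(1) hA(1)])
  moreover have "ea \<noteq> 0" by (auto simp: ea_def unitv_def fun_eq_iff)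
  ultimately have eaS: "ea \<in> DeltaS m A" by (simp add: DeltaS_iff)
  have "eb \<in> Delta m A" unfolding eb_def by (rule unitv_Delta[OF aa(2) hA(1)])
  moreover have "eb \<noteq> 0" by (auto simp: eb_def unitv_def fun_eq_iff)
  ultimately have ebS: "eb \<in> DeltaS m A" by (simp add: DeltaS_iff)
  have "ea + eb \<in> Delta m A" using eaS ebS by (simp add: DeltaS_iff Delta_add)
  moreover have "(ea + eb) a = 1" using aa(3) by (simp add: ea_def eb_def unitv_def)
  then have "ea + eb \<noteq> 0" by (metis zero_fun_def zero_neq_one)
  ultimately have eabS: "ea + eb \<in> DeltaS m A" by (simp add: DeltaS_iff)
  have B0: "0 \<in> Delta m B" by (rule Delta_zero)
  have G2a: "(0, z, 0) \<in> ?I" if "z \<in> vecs m" "z j = 1" for z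
  proof -
    have zC: "z \<in> DeltaC m C" using that j by (simp add: DeltaC_iff)
    have "(0, z, ea) + (0, ej, eb) + (0, ej, ea + eb) \<in> ?I"
      by (intro Iadd col0 zC ejC eaS ebS eabS B0)
    moreover have "(0, z, ea) + (0, ej, eb) + (0, ej, ea + eb) = (0::nat\<Rightarrow>bit, z, 0::nat\<Rightarrow>bit)"
      by (simp add: ac_simps)
    ultimately show ?thesis by simp
  qed
  have G2: "(0, z, 0) \<in> ?I" if "z \<in> vecs m" for z
  proof (cases "z j = 1")
    case True then show ?thesis using G2a that by blast
  next
    case False
    have "(0, z + ej, 0) + (0, ej, 0) \<in> ?I"
      using False that ejC j by (intro Iadd G2a) (auto simp: vecs_add DeltaC_iff ej_def unitv_def)
    moreover have "(0, z + ej, 0) + (0, ej, 0) = (0::nat\<Rightarrow>bit, z, 0::nat\<Rightarrow>bit)" by (simp add: ac_simps)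
    ultimately show ?thesis by simp
  qed
  have G3: "(0, 0, w) \<in> ?I" if "w \<in> Delta m A" for w
  proof (cases "w = 0")
    case True then show ?thesis using I0 by (simp add: zero_col)
  next
    case False
    have "(0, ej, w) + (0, ej, 0) \<in> ?I"
      using False that ejC j B0 by (intro Iadd G2 col0) (auto simp: DeltaS_iff DeltaC_sub[THEN subsetD])
    moreover have "(0, ej, w) + (0, ej, 0) = (0::nat\<Rightarrow>bit, 0::nat\<Rightarrow>bit, w)" by (simp add: ac_simps)
    ultimately show ?thesis by simp
  qed
  have G1B: "(x, 0, 0) \<in> ?I" if "x \<in> Delta m B" for x
  proof -
    have "(x, ej, ea) + (0, ej, ea) \<in> ?I"
      using that ejC eaS B0 by (intro Iadd col0) auto
    moreover have "(x, ej, ea) + (0, ej, ea) = (x, 0::nat\<Rightarrow>bit, 0::nat\<Rightarrow>bit)" by (simp add: ac_simps)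
    ultimately show ?thesis by simp
  qed
  have G1A: "(x, 0, 0) \<in> ?I" if "x \<in> Delta m A" for x
  proof (cases "x = 0")
    case True then show ?thesis using I0 by (simp add: zero_col)
  next
    case False
    have "(0 + x, ej, x) + (0, ej, 0) + (0, 0, x) \<in> ?I"
      using False that ejC B0 by (intro Iadd col1 G2 G3) (auto simp: DeltaS_iff DeltaC_sub[THEN subsetD])
    moreover have "(0 + x, ej, x) + (0, ej, 0) + (0, 0, x) = (x, 0::nat\<Rightarrow>bit, 0::nat\<Rightarrow>bit)" by (simp add: ac_simps)
    ultimately show ?thesis by simp
  qed
  show ?thesis
  proof
    fix v assume "v \<in> Vsp m A B"
    then obtain x z w where v: "v = (x, z, w)" "x \<in> Delta m (A \<union> B)" "z \<in> vecs m" "w \<in> Delta m A"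
      by (auto simp: Vsp_def)
    define xA where "xA = (\<lambda>i. if i \<in> A then x i else 0)"
    define xB where "xB = (\<lambda>i. if i \<in> B then x i else 0)"
    have xa: "xA \<in> Delta m A" "xB \<in> Delta m B" using v(2) hA
      by (auto simp: Delta_def vecs_def supp_def xA_def xB_def)
    have xx: "x = xA + xB" using v(2) hA(3)
      by (auto simp: fun_eq_iff Delta_def supp_def xA_def xB_def)
    have "(xA, 0, 0) + (xB, 0, 0) + (0, z, 0) + (0, 0, w) \<in> ?I"
      by (intro Iadd G1A G1B G2 G3 xa v(3) v(4))
    moreover have "(xA, 0, 0) + (xB, 0, 0) + (0, z, 0) + (0, 0, w) = v"
      using v(1) xx by simp
    ultimately show "v \<in> ?I" by simp
  qed
qed



lemma Vsp_V3: "Vsp m A B \<subseteq> V3 m"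
  unfolding Vsp_def V3_def using Delta_sub[of m "A \<union> B"] Delta_sub[of m A] by blast

lemma N4_V3: "N4 m A B C \<subseteq> V3 m"
  using N4_Vsp Vsp_V3 by blast

lemma card_Vsp: 
  assumes h: "hyp m A B C"
  shows "card (Vsp m A B) = 2 ^ (m + 2 * card A + card B)"
proof -
  have hA: "A \<subseteq> {1..m}" "B \<subseteq> {1..m}" "A \<inter> B = {}" using h by (auto simp: hyp_def)
  have fAB: "finite A" "finite B" using finite_subset[OF hA(1)] finite_subset[OF hA(2)] by simp_all
  have cu: "card (A \<union> B) = card A + card B" using fAB hA(3) by (simp add: card_Un_disjoint)
  have sub: "A \<union> B \<subseteq> {1..m}" using hA by blast
  have "card (Vsp m A B) = card (Delta m (A \<union> B)) * (card (vecs m) * card (Delta m A))"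
    unfolding Vsp_def by (simp add: card_cartesian_product)
  also have "\<dots> = 2 ^ (card A + card B) * (2 ^ m * 2 ^ card A)"
    using card_Delta[OF sub] card_Delta[OF hA(1)] card_vecs cu by simp
  also have "\<dots> = 2 ^ (m + 2 * card A + card B)" by (simp add: power_add[symmetric] mult_2)
  finally show ?thesis .
qed

lemma dual_card:
  assumes h: "hyp m A B C"
  defines "N \<equiv> N4 m A B C"
  shows "card (dual_code N (col_code m N)) = 2 ^ (card N - (m + 2 * card A + card B))"
    and "m + 2 * card A + card B \<le> card N"
proof -
  let ?D = "dual_code N (col_code m N)"
  let ?r = "m + 2 * card A + card B"
  have D: "?D = {y \<in> words N. Fcol N y = 0}" unfolding N_def by (rule dual_eq[OF finite_N4 N4_V3])
  have im: "Fcol N ` words N = Vsp m A B" unfolding N_def using image_sub[OF h] image_sup[OF h] by (rule equalityI)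
  have fN: "finite N" unfolding N_def by (rule finite_N4)
  have "card (words N) = card {y \<in> words N. Fcol N y = 0} * card (Fcol N ` words N)"
  proof (rule kernel_count)
    show "finite (words N)" by (rule finite_words[OF fN])
    show "\<And>x y. x \<in> words N \<Longrightarrow> y \<in> words N \<Longrightarrow> x + y \<in> words N" by (rule words_add)
    show "\<And>x y. x \<in> words N \<Longrightarrow> y \<in> words N \<Longrightarrow> Fcol N (x + y) = Fcol N x + Fcol N y" by (rule Fcol_add)
  qed simp
  then have eq: "2 ^ card N = card ?D * 2 ^ ?r" using card_words[OF fN] D im card_Vsp[OF h] by simp
  have "card ?D \<noteq> 0"
  proof
    assume "card ?D = 0"
    then have "(2::nat) ^ card N = 0" using eq by simp
    then show False by simp
  qed
  then have "2 ^ ?r \<le> (2::nat) ^ card N" using eq by simp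
  then show le: "?r \<le> card N" by simp
  have "2 ^ card N = 2 ^ (card N - ?r) * (2::nat) ^ ?r" using le by (simp add: power_add[symmetric])
  then show "card ?D = 2 ^ (card N - ?r)" using eq by simp
qed



lemma words_ind: "S \<subseteq> N \<Longrightarrow> (\<lambda>x. if x \<in> S then 1 else 0) \<in> words N"
  by (auto simp: words_def)

lemma N4_mem0: "w1 \<in> DeltaS m A \<Longrightarrow> u \<in> Delta m B \<Longrightarrow> w3 \<in> DeltaC m C \<Longrightarrow> (u, w3, w1) \<in> N4 m A B C"
  unfolding N4_def
  by (rule CollectI, rule exI[of _ w1], rule exI[of _ u], rule exI[of _ w3], rule exI[of _ 0]) simp

lemma N4_mem1: "w1 \<in> DeltaS m A \<Longrightarrow> w2 \<in> Delta m B \<Longrightarrow> w3 \<in> DeltaC m C \<Longrightarrow> (w2 + w1, w3, w1) \<in> N4 m A B C"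
  unfolding N4_def
  by (rule CollectI, rule exI[of _ w1], rule exI[of _ w2], rule exI[of _ w3], rule exI[of _ w1]) simp

lemma min_dist4:
  assumes h: "hyp m A B C"
  defines "N \<equiv> N4 m A B C"
  shows "min_dist N (dual_code N (col_code m N)) 4"
proof -
  let ?D = "dual_code N (col_code m N)"
  have D: "?D = {y \<in> words N. Fcol N y = 0}" unfolding N_def by (rule dual_eq[OF finite_N4 N4_V3])
  have fN: "finite N" unfolding N_def by (rule finite_N4)
  obtain j where j: "j \<in> {1..m}" "C = {1..m} - {j}" using missing_j[OF h] by blast
  have hA: "A \<subseteq> {1..m}" "B \<subseteq> {1..m}" "A \<noteq> {}" "C \<noteq> {}" using h by (auto simp: hyp_def)
  obtain a where a: "a \<in> A" using hA by auto
  obtain k where k: "k \<in> C" using hA by auto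
  have kj: "k \<noteq> j" "k \<in> {1..m}" using k j by auto
  have jC: "w \<in> N \<Longrightarrow> fst (snd w) j = 1" for w
    using N4_parts(2)[of w m A B C] DeltaC_iff[OF j] unfolding N_def by auto
  show ?thesis unfolding min_dist_def
  proof (intro conjI ballI impI)
    define ej where "ej = unitv j"
    define ek where "ek = unitv k"
    define ea where "ea = unitv a"
    have ejC: "ej \<in> DeltaC m C" using j by (simp add: DeltaC_iff ej_def unitv_vecs) (simp add: unitv_def)
    have ejkC: "ej + ek \<in> DeltaC m C" using j kj
      by (simp add: DeltaC_iff ej_def ek_def unitv_vecs vecs_add) (simp add: unitv_def)
    have "ea \<in> Delta m A" unfolding ea_def by (rule unitv_Delta[OF a hA(1)])
    moreover have "ea \<noteq> 0" by (auto simp: ea_def unitv_def fun_eq_iff)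
    ultimately have eaS: "ea \<in> DeltaS m A" by (simp add: DeltaS_iff)
    define p where "p = (0::nat\<Rightarrow>bit, ej, ea)"
    define q where "q = (0::nat\<Rightarrow>bit, ej + ek, ea)"
    define r where "r = (ea, ej, ea)"
    define s where "s = (ea, ej + ek, ea)"
    have B0: "0 \<in> Delta m B" by (rule Delta_zero)
    have inN: "p \<in> N" "q \<in> N" unfolding N_def p_def q_def
      by (rule N4_mem0[OF eaS B0 ejC], rule N4_mem0[OF eaS B0 ejkC])
    have "(0 + ea, ej, ea) \<in> N" "(0 + ea, ej + ek, ea) \<in> N" unfolding N_def
      by (rule N4_mem1[OF eaS B0 ejC], rule N4_mem1[OF eaS B0 ejkC])
    then have inN2: "r \<in> N" "s \<in> N" unfolding r_def s_def by simp_all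
    note inN = inN inN2
    have ne1: "ej \<noteq> ej + ek" using kj by (auto simp: fun_eq_iff ej_def ek_def unitv_def)
    have ne2: "(0::nat\<Rightarrow>bit) \<noteq> ea" by (auto simp: fun_eq_iff ea_def unitv_def)
    have dist: "p \<noteq> q" "p \<noteq> r" "p \<noteq> s" "q \<noteq> r" "q \<noteq> s" "r \<noteq> s"
      using ne1 ne2 by (auto simp: p_def q_def r_def s_def)
    define S where "S = {p, q, r, s}"
    define c where "c = (\<lambda>x. if x \<in> S then 1 else (0::bit))"
    have cS: "{x \<in> N. c x \<noteq> 0} = S" using inN by (auto simp: c_def S_def)
    have "sum id S = p + (q + (r + s))" using dist by (simp add: S_def)
    also have "\<dots> = 0" by (simp add: p_def q_def r_def s_def zero_col ac_simps)
    finally have s0: "sum id S = 0" .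
    have "c \<in> ?D" unfolding D using inN s0 Fcol_supp[OF fN, of c] cS
      by (auto simp: c_def S_def words_def)
    moreover have "c \<noteq> 0"
    proof
      assume "c = 0"
      then have "c p = 0" by simp
      then show False by (simp add: c_def S_def)
    qed
    moreover have "wt N c = 4" unfolding wt_def cS using dist by (simp add: S_def)
    ultimately show "\<exists>c\<in>?D. c \<noteq> 0 \<and> wt N c = 4" by blast
  next
    fix c assume c: "c \<in> ?D" "c \<noteq> 0"
    define S where "S = {x \<in> N. c x \<noteq> 0}"
    have fS: "finite S" using fN by (simp add: S_def)
    have cw: "c \<in> words N" "Fcol N c = 0" using c D by auto
    have s0: "sum id S = 0" using cw Fcol_supp[OF fN, of c] by (simp add: S_def)
    have Sne: "S \<noteq> {}"
    proof
      assume "S = {}"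
      have "c x = 0" for x
      proof (cases "x \<in> N")
        case True then show ?thesis using \<open>S = {}\<close> unfolding S_def by blast
      next
        case False then show ?thesis using cw(1) unfolding words_def by blast
      qed
      then have "c = 0" by (simp add: fun_eq_iff)
      then show False using c by simp
    qed
    have "fst (snd (sum id S)) j = (\<Sum>x\<in>S. fst (snd x) j)"
      by (simp add: fst_sum snd_sum sum_fun_apply)
    also have "\<dots> = (\<Sum>x\<in>S. 1)" using jC by (intro sum.cong) (auto simp: S_def)
    also have "\<dots> = of_nat (card S)" by simp
    finally have "of_nat (card S) = (0::bit)" using s0 by (simp add: zero_col)
    then have ev: "even (card S)" by (simp add: bit_of_nat)
    have c0: "card S \<noteq> 0" using fS Sne by simp
    have c2: "card S \<noteq> 2"
    proof
      assume "card S = 2"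
      then obtain x y where xy: "S = {x, y}" "x \<noteq> y" by (meson card_2_iff)
      then have "x + y = 0" using s0 by simp
      then have "x = y" by (rule char2_eq[rotated]) simp
      then show False using xy by simp
    qed
    have "4 \<le> card S" using ev c0 c2 by presburger
    then show "4 \<le> wt N c" by (simp add: wt_def S_def)
  qed
qed



lemma packing:
  fixes Cd :: "(nat \<Rightarrow> bit) set"
  assumes cd: "is_code_nkd {..<n} Cd n k 5" and hn: "h \<le> n"
  shows "h * (n - h) * 2 ^ k \<le> 2 ^ n"
proof -
  have bl: "Cd \<subseteq> words {..<n}" "0 \<in> Cd" "\<And>x y. x \<in> Cd \<Longrightarrow> y \<in> Cd \<Longrightarrow> x + y \<in> Cd"
    and cdim: "code_dim Cd k" and md: "\<forall>c\<in>Cd. c \<noteq> 0 \<longrightarrow> 5 \<le> wt {..<n} c"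
    using cd by (auto simp: is_code_nkd_def bin_linear_code_def min_dist_def)
  have cC: "card Cd = 2 ^ k" by (rule code_dim_card[OF _ cdim bl(2) bl(3)]) simp
  define g where "g = (\<lambda>p. unitv (fst p) + unitv (snd p))"
  define W where "W = g ` ({..<h} \<times> {h..<n})"
  have ginj: "inj_on g ({..<h} \<times> {h..<n})"
  proof (rule inj_onI)
    fix x y assume x: "x \<in> {..<h} \<times> {h..<n}" and y: "y \<in> {..<h} \<times> {h..<n}" and e: "g x = g y"
    obtain i l where il: "x = (i, l)" by (cases x)
    obtain i' l' where il': "y = (i', l')" by (cases y)
    have r: "i < h" "h \<le> l" "i' < h" "h \<le> l'" using x y il il' by auto
    have e': "unitv i + unitv l = unitv i' + unitv l'" using e il il' by (simp add: g_def)
    have "(unitv i + unitv l) i = (unitv i' + unitv l') i" using e' by simp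
    then have "i = i'" using r by (auto simp: unitv_def split: if_splits)
    moreover have "(unitv i + unitv l) l = (unitv i' + unitv l') l" using e' by simp
    then have "l = l'" using r by (auto simp: unitv_def split: if_splits)
    ultimately show "x = y" using il il' by simp
  qed
  have cW: "card W = h * (n - h)" unfolding W_def using card_image[OF ginj] by (simp add: card_cartesian_product)
  have Ww: "W \<subseteq> words {..<n}" using hn by (auto simp: W_def g_def words_def unitv_def)
  have wtW: "wt {..<n} (w + w') \<le> 4" if wW: "w \<in> W" and wW': "w' \<in> W" for w w'
  proof -
    obtain p where p: "w = g p" using wW unfolding W_def by blast
    obtain p' where p': "w' = g p'" using wW' unfolding W_def by blast
    obtain i l i' l' where "w = unitv i + unitv l" "w' = unitv i' + unitv l'"
      using p p' unfolding g_def by blast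
    then have "{x \<in> {..<n}. (w + w') x \<noteq> 0} \<subseteq> {i, l, i', l'}" by (auto simp: unitv_def)
    then have "card {x \<in> {..<n}. (w + w') x \<noteq> 0} \<le> card {i, l, i', l'}" by (rule card_mono[rotated]) simp
    also have "\<dots> \<le> 4" by (simp add: card_insert_if)
    finally show ?thesis by (simp add: wt_def)
  qed
  have inj: "inj_on (\<lambda>(w, c). w + c) (W \<times> Cd)"
  proof (rule inj_onI)
    fix x y assume x: "x \<in> W \<times> Cd" and y: "y \<in> W \<times> Cd" and e: "(\<lambda>(w, c). w + c) x = (\<lambda>(w, c). w + c) y"
    obtain w c where wc: "x = (w, c)" by (cases x)
    obtain w' c' where wc': "y = (w', c')" by (cases y)
    have e': "w + c = w' + c'" using e wc wc' by simp
    have "w + w' = (w + c) + (w' + c)" by (simp add: ac_simps)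
    also have "\<dots> = (w' + c') + (w' + c)" using e' by simp
    also have "\<dots> = c' + c" by (simp add: ac_simps)
    finally have ww: "w + w' = c' + c" .
    have "w = w'"
    proof (rule ccontr)
      assume "w \<noteq> w'"
      then have "w + w' \<noteq> 0" using char2_eq[of w w'] by auto
      moreover have "c' + c \<in> Cd" using bl(3) x y wc wc' by auto
      ultimately have "5 \<le> wt {..<n} (w + w')" using md ww by auto
      moreover have "wt {..<n} (w + w') \<le> 4" using wtW x y wc wc' by auto
      ultimately show False by simp
    qed
    then have "c = c'" using e' by simp
    then show "x = y" using wc wc' \<open>w = w'\<close> by simp
  qed
  have "(\<lambda>(w, c). w + c) ` (W \<times> Cd) \<subseteq> words {..<n}"
  proof
    fix x assume "x \<in> (\<lambda>(w, c). w + c) ` (W \<times> Cd)"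
    then obtain w c where "w \<in> W" "c \<in> Cd" "x = w + c" by auto
    then show "x \<in> words {..<n}" using Ww bl(1) words_add by blast
  qed
  then have "card ((\<lambda>(w, c). w + c) ` (W \<times> Cd)) \<le> card (words {..<n})"
    by (rule card_mono[OF finite_words[of "{..<n}"], rotated]) simp
  then have "card (W \<times> Cd) \<le> 2 ^ n" using card_image[OF inj] card_words[of "{..<n}"] by simp
  then show ?thesis using cW cC by (simp add: card_cartesian_product)
qed

lemma arith1:
  fixes u t :: nat assumes "u \<ge> 2" "t \<ge> 3"
  shows "4 * u * (t + 1) ^ 2 < (2 * u * t) * (2 * u * t)"
proof -
  have "(t + 1) ^ 2 < 2 * t ^ 2"
  proof -
    have a: "3 * t \<le> t * t" using assms(2) by simp
    have b: "(t + 1) ^ 2 = t * t + 2 * t + 1" by (simp add: power2_eq_square algebra_simps)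
    have c: "2 * t ^ 2 = 2 * (t * t)" by (simp add: power2_eq_square)
    show ?thesis using a b c assms(2) by linarith
  qed
  also have "2 * t ^ 2 \<le> u * t ^ 2" using assms(1) by simp
  finally have "(t + 1) ^ 2 < u * t ^ 2" .
  then have "4 * u * (t + 1) ^ 2 < 4 * u * (u * t ^ 2)" using assms(1) by simp
  then show ?thesis by (simp add: power2_eq_square algebra_simps)
qed



theorem mainTheorem16:
  fixes m :: nat and A B C :: "nat set"
  assumes "m \<ge> 2"
    and "A \<noteq> {}" "A \<subseteq> {1..m}" "B \<noteq> {}" "B \<subseteq> {1..m}" "C \<noteq> {}" "C \<subseteq> {1..m}"
    and "A \<inter> B = {}" and "card C = m - 1" and "card A \<ge> 2"
  shows "is_code_nkd (N4 m A B C) (dual_code (N4 m A B C) (col_code m (N4 m A B C)))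
           (2 ^ (m + card A + card B) - 2 ^ (m + card B))
           (2 ^ (m + card A + card B) - 2 ^ (m + card B) - m - 2 * card A - card B) 4
       \<and> distance_optimal (2 ^ (m + card A + card B) - 2 ^ (m + card B))
           (2 ^ (m + card A + card B) - 2 ^ (m + card B) - m - 2 * card A - card B) 4"
proof -
  have h: "hyp m A B C" using assms by (simp add: hyp_def)
  define N where "N = N4 m A B C"
  define D where "D = dual_code N (col_code m N)"
  define n where "n = 2 ^ (m + card A + card B) - (2::nat) ^ (m + card B)"
  define r where "r = m + 2 * card A + card B"
  have kk: "n - m - 2 * card A - card B = n - r" by (simp add: r_def)
  have cN: "card N = n" unfolding N_def n_def by (rule card_N4[OF h])
  have fN: "finite N" unfolding N_def by (rule finite_N4)
  have Dq: "D = {y \<in> words N. Fcol N y = 0}" unfolding D_def N_def by (rule dual_eq[OF finite_N4 N4_V3])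
  have cD: "card D = 2 ^ (n - r)" and rn: "r \<le> n"
    using dual_card[OF h] cN unfolding D_def N_def r_def by auto
  have fD: "finite D" using Dq finite_words[OF fN] by simp
  have D0: "0 \<in> D" using Dq Fcol_zero by (simp add: words_def)
  have Dadd: "x + y \<in> D" if "x \<in> D" "y \<in> D" for x y
  proof -
    have "x \<in> words N" "y \<in> words N" "Fcol N x = 0" "Fcol N y = 0" using that Dq by auto
    then have "x + y \<in> words N" "Fcol N (x + y) = 0" using words_add[of x N y] by (simp_all add: Fcol_add)
    then show ?thesis using Dq by simp
  qed
  have code: "is_code_nkd N D n (n - r) 4"
    unfolding is_code_nkd_def bin_linear_code_def
  proof (intro conjI ballI)
    show "finite N" by (rule fN)
    show "D \<subseteq> words N" using Dq by auto
    show "0 \<in> D" by (rule D0)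
    show "\<And>x y. x \<in> D \<Longrightarrow> y \<in> D \<Longrightarrow> x + y \<in> D" by (rule Dadd)
    show "card N = n" by (rule cN)
    show "code_dim D (n - r)" by (rule card_code_dim[OF _ fD D0 Dadd cD]) simp
    show "min_dist N D 4" unfolding N_def D_def by (rule min_dist4[OF h])
  qed
  have opt: "distance_optimal n (n - r) 4"
    unfolding distance_optimal_def
  proof
    assume "\<exists>Cd :: (nat \<Rightarrow> bit) set. is_code_nkd {..<n} Cd n (n - r) (4 + 1)"
    then obtain Cd :: "(nat \<Rightarrow> bit) set" where cd: "is_code_nkd {..<n} Cd n (n - r) 5" by auto
    define s where "s = m + card B"
    have bpos: "card B \<ge> 1" using assms(4,5) finite_subset[OF assms(5)] by (simp add: Suc_le_eq card_gt_0_iff)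
    have s3: "s \<ge> 3" using bpos assms(1) by (simp add: s_def)
    define u where "u = (2::nat) ^ (s - 2)"
    define t where "t = (2::nat) ^ card A - 1"
    have "(2::nat) ^ 1 \<le> 2 ^ (s - 2)" using s3 by (intro power_increasing) auto
    then have u2: "u \<ge> 2" unfolding u_def by simp
    have "(2::nat) ^ card A \<ge> 2 ^ 2" using assms(10) by (intro power_increasing) auto
    then have t3: "t \<ge> 3" by (simp add: t_def)
    have tA: "(2::nat) ^ card A = t + 1" using t3 by (simp add: t_def)
    have "s = (s - 2) + 2" using s3 by simp
    then have "(2::nat) ^ s = 2 ^ (s - 2) * 2 ^ 2" by (metis power_add)
    then have s4: "(2::nat) ^ s = 4 * u" unfolding u_def by simp
    have nval: "n = 4 * u * t"
    proof -
      have "n = 2 ^ s * 2 ^ card A - 2 ^ s" unfolding n_def s_def by (simp add: power_add ac_simps)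
      also have "\<dots> = 4 * u * (t + 1) - 4 * u" using s4 tA by simp
      finally show ?thesis by (simp add: algebra_simps)
    qed
    define hh where "hh = 2 * u * t"
    have hn: "hh \<le> n" "n - hh = 2 * u * t" using nval by (auto simp: hh_def)
    have rv: "(2::nat) ^ r = 4 * u * (t + 1) ^ 2"
    proof -
      have "(2::nat) ^ r = 2 ^ s * (2 ^ card A) ^ 2" unfolding r_def s_def
        by (simp add: power_add power_mult[symmetric] ac_simps mult_2)
      then show ?thesis using s4 tA by simp
    qed
    have "hh * (n - hh) * 2 ^ (n - r) \<le> 2 ^ n" by (rule packing[OF cd hn(1)])
    also have "\<dots> = 2 ^ r * 2 ^ (n - r)" using rn by (simp add: power_add[symmetric])
    finally have "hh * (n - hh) \<le> 2 ^ r" by simp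
    then have "2 * u * t * (2 * u * t) \<le> 4 * u * (t + 1) ^ 2" using hn rv by (simp add: hh_def)
    then show False using arith1[OF u2 t3] by simp
  qed
  show ?thesis using code opt kk unfolding N_def D_def n_def by simp
qed

end
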